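(* For $(f,g),(f',g')\in\Theta$ both in general position, $$d_{\mathrm{rep}}((f,g),(f',g'))=0\iff d_{\mathrm{logit}}(p_{f,g},p_{f',g'})=0.$$
   Context: Model class $\Theta$: pairs $(f,g)$, $f:\mathcal X\to\mathbb R^m$, $g:\mathcal Y\to\mathbb R^m$, $\mathcal Y$ a finite set of $k$ labels, $\sum_y g(y)=0$, inducing $p_{f,g}(y\mid x)\propto\exp(f(x)^\top g(y))$; $p_x$ is the data distribution. Logits $u(x)=(f(x)^\top g(y))_{y\in\mathcal Y}$, $d_{\mathrm{logit}}^2=\mathbb E_{x\sim p_x}\|u(x)-u'(x)\|_2^2$. For a pivot $\tilde y\in\mathcal Y$ set $\tilde g(y)=g(y)-g(\tilde y)$, and for $\mathcal J=\{y_1,\dots,y_m\}\subseteq\mathcal Y\setminus\{\tilde y\}$ let $\tilde L_{\mathcal J}=(\tilde g(y_1)\ \cdots\ \tilde g(y_m))\in\mathbb R^{m\times m}$ (similarly $\tilde L'_{\mathcal J}$ from $g'$). A model is in general position if $\tilde L_{\mathcal J}$ is invertible for every pivot $\tilde y$ and every $m$-subset $\mathcal J\subseteq\mathcal Y\setminus\{\tilde y\}$, and $\mathrm{span}\{f(x):x\in\mathrm{supp}(p_x)\}=\mathbb R^m$. Put $\tilde A_{\mathcal J}=\tilde L_{\mathcal J}^{-\top}\tilde L_{\mathcal J}'^{\top}$ and $J=\binom{k-1}{m}$. The linear identifiability dissimilarity is $$d_{\mathrm{rep}}^2((f,g),(f',g'))=\frac{1}{kJ}\sum_{\tilde y\in\mathcal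 Y}\ \sum_{\mathcal J\subseteq\mathcal Y\setminus\{\tilde y\},\,|\mathcal J|=m}\mathbb E_{x\sim p_x}\|f(x)-\tilde A_{\mathcal J}f'(x)\|_2^2.$$ *)

theory Defs
  imports "HOL-Probability.Probability"
begin

text \<open>Features f : X -> R^m are functions 'x => real^'m (m = CARD('m)),
  label embeddings g : Y -> R^m with Y a finite type of k = CARD('y) labels.\<close>

definition in_Theta :: "('y::finite \<Rightarrow> real^'m) \<Rightarrow> bool" where
  "in_Theta g \<longleftrightarrow> (\<Sum>y\<in>UNIV. g y) = 0"

definition logits :: "('x \<Rightarrow> real^'m) \<Rightarrow> ('y::finite \<Rightarrow> real^'m) \<Rightarrow> 'x \<Rightarrow> real^'y" where
  "logits f g x = (\<chi> y. f x \<bullet> g y)"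

definition d_logit_sq :: "'x measure \<Rightarrow> ('x \<Rightarrow> real^'m) \<Rightarrow> ('y::finite \<Rightarrow> real^'m)
    \<Rightarrow> ('x \<Rightarrow> real^'m) \<Rightarrow> ('y \<Rightarrow> real^'m) \<Rightarrow> ennreal" where
  "d_logit_sq px f g f' g' =
     (\<integral>\<^sup>+ x. ennreal ((norm (logits f g x - logits f' g' x))\<^sup>2) \<partial>px)"

definition pivoted :: "('y \<Rightarrow> real^'m) \<Rightarrow> 'y \<Rightarrow> 'y \<Rightarrow> real^'m" where
  "pivoted g yt y = g y - g yt"

text \<open>A fixed enumeration (y_1,...,y_m) of an m-subset J (the choice of order is irrelevant).\<close>
definition enum_subset :: "'y set \<Rightarrow> 'm::finite \<Rightarrow> 'y" where
  "enum_subset J = (SOME e. bij_betw e (UNIV::'m set) J)"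

definition Lmat :: "('y \<Rightarrow> real^'m::finite) \<Rightarrow> 'y \<Rightarrow> 'y set \<Rightarrow> real^'m^'m" where
  "Lmat g yt J = (\<chi> i j. pivoted g yt (enum_subset J j) $ i)"

definition Amat :: "('y \<Rightarrow> real^'m::finite) \<Rightarrow> ('y \<Rightarrow> real^'m) \<Rightarrow> 'y \<Rightarrow> 'y set \<Rightarrow> real^'m^'m" where
  "Amat g g' yt J = matrix_inv (transpose (Lmat g yt J)) ** transpose (Lmat g' yt J)"

definition msubsets :: "'m::finite itself \<Rightarrow> 'y \<Rightarrow> 'y set set" where
  "msubsets _ yt = {J. J \<subseteq> UNIV - {yt} \<and> card J = CARD('m)}"

definition measure_support :: "'x::topological_space measure \<Rightarrow> 'x set" where
  "measure_support px = {x. \<forall>U. open U \<and> x \<in> U \<longrightarrow> emeasure px U > 0}"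

definition general_position ::
    "'x::topological_space measure \<Rightarrow> ('x \<Rightarrow> real^'m::finite) \<Rightarrow> ('y::finite \<Rightarrow> real^'m) \<Rightarrow> bool" where
  "general_position px f g \<longleftrightarrow>
     (\<forall>yt. \<forall>J \<in> msubsets TYPE('m) yt. invertible (Lmat g yt J :: real^'m^'m)) \<and>
     span (f ` measure_support px) = UNIV"

definition d_rep_sq :: "'x measure \<Rightarrow> ('x \<Rightarrow> real^'m::finite) \<Rightarrow> ('y::finite \<Rightarrow> real^'m)
    \<Rightarrow> ('x \<Rightarrow> real^'m) \<Rightarrow> ('y \<Rightarrow> real^'m) \<Rightarrow> ennreal" where
  "d_rep_sq px f g f' g' =
     ennreal (1 / (real CARD('y) * real (CARD('y) - 1 choose CARD('m)))) *
     (\<Sum>yt\<in>UNIV. \<Sum>J\<in>msubsets TYPE('m) yt.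
        \<integral>\<^sup>+ x. ennreal ((norm (f x - Amat g g' yt J *v f' x))\<^sup>2) \<partial>px)"

end

theory Submission
  imports Defs
begin

lemma matrix_inv_props:
  fixes M :: "real^'m::finite^'m"
  assumes "invertible M"
  shows "M ** matrix_inv M = mat 1 \<and> matrix_inv M ** M = mat 1"
  using assms unfolding invertible_def matrix_inv_def by (rule someI_ex)

lemma key_inv:
  fixes M N :: "real^'m::finite^'m"
  assumes "invertible M"
  shows "v = (matrix_inv M ** N) *v w \<longleftrightarrow> M *v v = N *v w"
proof -
  have h1: "M ** matrix_inv M = mat 1" and h2: "matrix_inv M ** M = mat 1"
    using matrix_inv_props[OF assms] by auto
  show ?thesis
  proof
    assume "v = (matrix_inv M ** N) *v w"
    then have "M *v v = (M ** matrix_inv M ** N) *v w"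
      by (simp add: matrix_vector_mul_assoc matrix_mul_assoc)
    then show "M *v v = N *v w" using h1 by simp
  next
    assume a: "M *v v = N *v w"
    have "v = (matrix_inv M ** M) *v v" using h2 by simp
    also have "\<dots> = matrix_inv M *v (M *v v)" by (simp add: matrix_vector_mul_assoc)
    also have "\<dots> = (matrix_inv M ** N) *v w" using a by (simp add: matrix_vector_mul_assoc)
    finally show "v = (matrix_inv M ** N) *v w" .
  qed
qed

lemma transpose_L_apply:
  "(transpose (Lmat g yt J) *v v) $ j = v \<bullet> pivoted g yt (enum_subset J j)"
  unfolding matrix_vector_mult_def transpose_def Lmat_def inner_vec_def
  by (simp add: mult.commute)

lemma enum_bij:
  assumes "J \<in> msubsets TYPE('m::finite) yt"
  shows "bij_betw (enum_subset J :: 'm \<Rightarrow> 'y::finite) UNIV J"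
proof -
  have "card J = CARD('m)" using assms by (simp add: msubsets_def)
  then have "\<exists>e. bij_betw e (UNIV::'m set) J"
    by (metis finite_same_card_bij finite finite_UNIV)
  then show ?thesis unfolding enum_subset_def by (rule someI_ex)
qed

lemma pointwise_A:
  fixes a b :: "real^'m::finite" and g g' :: "'y::finite \<Rightarrow> real^'m"
  assumes "invertible (Lmat g yt J)" "J \<in> msubsets TYPE('m) yt"
  shows "a = Amat g g' yt J *v b \<longleftrightarrow> (\<forall>y\<in>J. a \<bullet> (g y - g yt) = b \<bullet> (g' y - g' yt))"
proof -
  have "a = Amat g g' yt J *v b \<longleftrightarrow>
        transpose (Lmat g yt J) *v a = transpose (Lmat g' yt J) *v b"
    unfolding Amat_def by (rule key_inv[OF transpose_invertible[OF assms(1)]])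
  also have "\<dots> \<longleftrightarrow> (\<forall>j::'m. a \<bullet> pivoted g yt (enum_subset J j) = b \<bullet> pivoted g' yt (enum_subset J j))"
    by (simp only: vec_eq_iff transpose_L_apply)
  also have "\<dots> \<longleftrightarrow> (\<forall>y\<in>range (enum_subset J :: 'm \<Rightarrow> 'y). a \<bullet> (g y - g yt) = b \<bullet> (g' y - g' yt))"
    unfolding pivoted_def by blast
  also have "range (enum_subset J :: 'm \<Rightarrow> 'y) = J"
    using enum_bij[OF assms(2)] unfolding bij_betw_def by blast
  finally show ?thesis .
qed

lemma exists_J:
  assumes "CARD('m::finite) \<le> CARD('y::finite) - 1" "(y::'y) \<noteq> yt"
  shows "\<exists>J\<in>msubsets TYPE('m) yt. y \<in> J"
proof -
  have c: "card (UNIV - {yt, y}) = CARD('y) - 2"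
    using assms(2) by (simp add: card_Diff_subset)
  have "CARD('m) - 1 \<le> card (UNIV - {yt, y})" using c assms(1) by simp
  then obtain S where S: "S \<subseteq> UNIV - {yt, y}" "card S = CARD('m) - 1"
    using ex_card by blast
  have "finite S" by simp
  have "y \<notin> S" using S by auto
  have pos: "0 < CARD('m)" by simp
  have "card (insert y S) = CARD('m)" using S \<open>finite S\<close> \<open>y \<notin> S\<close> pos
    by simp
  moreover have "insert y S \<subseteq> UNIV - {yt}" using S assms(2) by auto
  ultimately have "insert y S \<in> msubsets TYPE('m) yt"
    unfolding msubsets_def by (simp only: mem_Collect_eq conj_commute)
  then show ?thesis by (rule bexI[rotated]) simp
qed

lemma meas_Av:
  fixes f' :: "'x \<Rightarrow> real^'m::finite" and A :: "real^'m^'m"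
  assumes "f' \<in> borel_measurable M"
  shows "(\<lambda>x. A *v f' x) \<in> borel_measurable M"
  using measurable_compose[OF assms borel_measurable_continuous_onI[OF matrix_vector_mult_linear_continuous_on]] .

lemma meas_logits:
  fixes f :: "'x \<Rightarrow> real^'m::finite" and g :: "'y::finite \<Rightarrow> real^'m"
  assumes "f \<in> borel_measurable M"
  shows "(\<lambda>x. logits f g x) \<in> borel_measurable M"
proof -
  have c: "continuous_on UNIV (\<lambda>v::real^'m. \<chi> y. v \<bullet> g y)"
    by (intro continuous_intros)
  show ?thesis unfolding logits_def
    using measurable_compose[OF assms borel_measurable_continuous_onI[OF c]] by simp
qed

lemma pointwise_main:
  fixes a b :: "real^'m::finite" and g g' :: "'y::finite \<Rightarrow> real^'m"
  assumes inv: "\<forall>yt. \<forall>J\<in>msubsets TYPE('m) yt. invertible (Lmat g yt J)"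
    and card: "CARD('m) \<le> CARD('y) - 1" and th: "in_Theta g" "in_Theta g'"
  shows "(\<forall>yt. \<forall>J\<in>msubsets TYPE('m) yt. a = Amat g g' yt J *v b) \<longleftrightarrow> (\<forall>y. a \<bullet> g y = b \<bullet> g' y)"
proof
  assume H: "\<forall>yt. \<forall>J\<in>msubsets TYPE('m) yt. a = Amat g g' yt J *v b"
  have D: "a \<bullet> (g y - g yt) = b \<bullet> (g' y - g' yt)" for y yt
  proof (cases "y = yt")
    case True then show ?thesis by simp
  next
    case False
    obtain J where J: "J \<in> msubsets TYPE('m) yt" "y \<in> J" using exists_J[OF card False] by blast
    have "a = Amat g g' yt J *v b" using H J by blast
    then show ?thesis using pointwise_A[of g yt J a g' b] inv J by blast
  qed
  show "\<forall>y. a \<bullet> g y = b \<bullet> g' y"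
  proof
    fix y
    have "(\<Sum>yt\<in>UNIV. a \<bullet> (g y - g yt)) = (\<Sum>yt\<in>UNIV. b \<bullet> (g' y - g' yt))" using D by simp
    moreover have "(\<Sum>yt\<in>UNIV. a \<bullet> (g y - g yt)) = real CARD('y) * (a \<bullet> g y) - a \<bullet> (\<Sum>yt\<in>UNIV. g yt)"
      by (simp add: inner_diff_right sum_subtractf inner_sum_right)
    moreover have "(\<Sum>yt\<in>UNIV. b \<bullet> (g' y - g' yt)) = real CARD('y) * (b \<bullet> g' y) - b \<bullet> (\<Sum>yt\<in>UNIV. g' yt)"
      by (simp add: inner_diff_right sum_subtractf inner_sum_right)
    ultimately have "real CARD('y) * (a \<bullet> g y) = real CARD('y) * (b \<bullet> g' y)"
      using th unfolding in_Theta_def by simp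
    then show "a \<bullet> g y = b \<bullet> g' y" by simp
  qed
next
  assume H: "\<forall>y. a \<bullet> g y = b \<bullet> g' y"
  show "\<forall>yt. \<forall>J\<in>msubsets TYPE('m) yt. a = Amat g g' yt J *v b"
  proof (intro allI ballI)
    fix yt :: 'y and J assume J: "J \<in> msubsets TYPE('m) yt"
    show "a = Amat g g' yt J *v b"
      using pointwise_A[of g yt J a g' b] inv J H by (simp add: inner_diff_right)
  qed
qed

theorem mainTheorem6:
  fixes px :: "'x::topological_space measure"
    and f f' :: "'x \<Rightarrow> real^'m::finite"
    and g g' :: "'y::finite \<Rightarrow> real^'m"
  assumes "prob_space px"
    and "sets px = sets borel"
    and "f \<in> borel_measurable px" and "f' \<in> borel_measurable px"
    and "CARD('m) \<le> CARD('y) - 1"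
    and "in_Theta g" and "in_Theta g'"
    and "general_position px f g" and "general_position px f' g'"
  shows "d_rep_sq px f g f' g' = 0 \<longleftrightarrow> d_logit_sq px f g f' g' = 0"
proof -
  have inv: "\<forall>yt. \<forall>J\<in>msubsets TYPE('m) yt. invertible (Lmat g yt J)"
    using assms(8) unfolding general_position_def by blast
  have fU: "finite (UNIV::'y set)" by simp
  have fin: "finite (msubsets TYPE('m) yt)" for yt :: 'y by simp
  have cpos: "0 < real (CARD('y) - 1 choose CARD('m))"
    using assms(5) by simp
  have c_ne: "ennreal (1 / (real CARD('y) * real (CARD('y) - 1 choose CARD('m)))) \<noteq> 0"
  proof -
    have "0 < real CARD('y)" by simp
    then have "0 < 1 / (real CARD('y) * real (CARD('y) - 1 choose CARD('m)))"
      using cpos by simp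
    then show ?thesis by (simp add: ennreal_eq_0_iff)
  qed
  have mA: "(\<lambda>x. ennreal ((norm (f x - Amat g g' yt J *v f' x))\<^sup>2)) \<in> borel_measurable px" for yt J
    using assms(3) meas_Av[OF assms(4)] by measurable
  have mL: "(\<lambda>x. ennreal ((norm (logits f g x - logits f' g' x))\<^sup>2)) \<in> borel_measurable px"
    using meas_logits[OF assms(3)] meas_logits[OF assms(4)] by measurable
  have rep0: "d_rep_sq px f g f' g' = 0 \<longleftrightarrow>
     (\<forall>yt\<in>UNIV. \<forall>J\<in>msubsets TYPE('m) yt. AE x in px. f x = Amat g g' yt J *v f' x)"
    unfolding d_rep_sq_def using c_ne
    by (simp add: sum_eq_0_iff fin nn_integral_0_iff_AE[OF mA] ennreal_eq_0_iff)
  have logit0: "d_logit_sq px f g f' g' = 0 \<longleftrightarrow>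
     (AE x in px. logits f g x = logits f' g' x)"
    unfolding d_logit_sq_def
    by (simp add: nn_integral_0_iff_AE[OF mL] ennreal_eq_0_iff)
  have "(\<forall>yt\<in>UNIV. \<forall>J\<in>msubsets TYPE('m) yt. AE x in px. f x = Amat g g' yt J *v f' x)
     \<longleftrightarrow> (AE x in px. \<forall>yt\<in>UNIV. \<forall>J\<in>msubsets TYPE('m) yt. f x = Amat g g' yt J *v f' x)"
    by (simp only: AE_finite_all[OF fU] AE_finite_all[OF fin])
  also have "\<dots> \<longleftrightarrow> (AE x in px. logits f g x = logits f' g' x)"
  proof (rule AE_cong)
    fix x
    show "(\<forall>yt\<in>UNIV. \<forall>J\<in>msubsets TYPE('m) yt. f x = Amat g g' yt J *v f' x) \<longleftrightarrow>
          logits f g x = logits f' g' x"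
      using pointwise_main[OF inv assms(5) assms(6) assms(7), of "f x" "f' x"]
      by (simp add: logits_def vec_eq_iff)
  qed
  finally show ?thesis using rep0 logit0 by simp
qed

end
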